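(* Let $1\le p<2$, $f\in\mathcal H_0$, $u$ the solution of $\partial_tu+\partial J(u)\ni0$, $u(0)=f$, with extinction time $T_{\mathrm{ex}}$, and $w(t):=u(t)/a(t)$ with $a(t)=(1-t/T_{\mathrm{ex}})^{1/(2-p)}$. Assume $T_{\mathrm{ex}}=\frac{\|f\|^{2-p}}{(2-p)\lambda_1}$ and let $w_*$ be an asymptotic profile, i.e. $w_*\in\mathcal H$ with $w(t_k)\to w_*$ strongly for some $t_k\nearrow T_{\mathrm{ex}}$. Then $w_*$ is a ground state.
   Context: $\mathcal H$ is a real Hilbert space with inner product $\langle\cdot,\cdot\rangle$ and norm $\|\cdot\|$. $J:\mathcal H\to\mathbb R\cup\{\infty\}$ is convex, lower semicontinuous, proper, with dense effective domain, and absolutely $p$-homogeneous: $J(cu)=|c|^pJ(u)$ for $c\ne0$, $J(0)=0$. $\partial J(u)=\{\zeta: J(u)+\langle\zeta,v-u\rangle\le J(v)\ \forall v\}$; $\mathcal N(J)=\{u:J(u)=0\}$; $\mathcal H_0:=\mathcal N(J)^\perp\setminus\{0\}$. Rayleigh quotient $R(u):=pJ(u)/\|u\|^p$; standing coercivity assumption $\lambda_1:=\inf_{u\in\mathcal H_0}R(u)>0$; a ground state is a minimizer of $R$ over $\mathcal H_0$. The gradient flow solution (Brezis) is the unique continuous $u:[0,\infty)\to\mathcal H$, Lipschitz on $[\delta,\infty)$ for all $\delta>0$, right-differentiable on $(0,\infty)$ with $u(0)=f$ and $\partial_t^+u(t)=-\zeta(t)$, $\zeta(t)$ the minimal-norm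 element of $\partial J(u(t))$. $T_{\mathrm{ex}}:=\inf\{T>0:u(t)=0\ \forall t\ge T\}$. *)

theory Defs
  imports "HOL-Analysis.Analysis"
begin

definition convex_fun :: "('a::real_vector \<Rightarrow> ereal) \<Rightarrow> bool" where
  "convex_fun J \<longleftrightarrow> (\<forall>u v. \<forall>t::real. 0 \<le> t \<and> t \<le> 1 \<longrightarrow>
      J ((1 - t) *\<^sub>R u + t *\<^sub>R v) \<le> ereal (1 - t) * J u + ereal t * J v)"

definition lsc_fun :: "('a::topological_space \<Rightarrow> ereal) \<Rightarrow> bool" where
  "lsc_fun J \<longleftrightarrow> (\<forall>c::real. closed {u. J u \<le> ereal c})"

definition proper_fun :: "('a \<Rightarrow> ereal) \<Rightarrow> bool" where
  "proper_fun J \<longleftrightarrow> (\<forall>u. J u \<noteq> -\<infinity>) \<and> (\<exists>u. J u \<noteq> \<infinity>)"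

definition dense_domain :: "('a::topological_space \<Rightarrow> ereal) \<Rightarrow> bool" where
  "dense_domain J \<longleftrightarrow> closure {u. J u < \<infinity>} = UNIV"

definition abs_homogeneous :: "real \<Rightarrow> ('a::real_vector \<Rightarrow> ereal) \<Rightarrow> bool" where
  "abs_homogeneous p J \<longleftrightarrow> J 0 = 0 \<and>
      (\<forall>c u. c \<noteq> 0 \<longrightarrow> J (c *\<^sub>R u) = ereal (\<bar>c\<bar> powr p) * J u)"

definition subdiff :: "('a::real_inner \<Rightarrow> ereal) \<Rightarrow> 'a \<Rightarrow> 'a set" where
  "subdiff J u = {\<zeta>. \<forall>v. J u + ereal (\<zeta> \<bullet> (v - u)) \<le> J v}"

definition min_norm_subgrad :: "('a::real_inner \<Rightarrow> ereal) \<Rightarrow> 'a \<Rightarrow> 'a \<Rightarrow> bool" where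
  "min_norm_subgrad J u \<zeta> \<longleftrightarrow> \<zeta> \<in> subdiff J u \<and> (\<forall>\<eta>\<in>subdiff J u. norm \<zeta> \<le> norm \<eta>)"

definition nullspace_J :: "('a \<Rightarrow> ereal) \<Rightarrow> 'a set" where
  "nullspace_J J = {u. J u = 0}"

definition H0 :: "('a::real_inner \<Rightarrow> ereal) \<Rightarrow> 'a set" where
  "H0 J = orthogonal_comp (nullspace_J J) - {0}"

definition rayleigh :: "real \<Rightarrow> ('a::real_normed_vector \<Rightarrow> ereal) \<Rightarrow> 'a \<Rightarrow> ereal" where
  "rayleigh p J u = ereal p * J u / ereal (norm u powr p)"

definition lambda1 :: "real \<Rightarrow> ('a::real_inner \<Rightarrow> ereal) \<Rightarrow> ereal" where
  "lambda1 p J = (INF u\<in>H0 J. rayleigh p J u)"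

definition ground_state :: "real \<Rightarrow> ('a::real_inner \<Rightarrow> ereal) \<Rightarrow> 'a \<Rightarrow> bool" where
  "ground_state p J u \<longleftrightarrow> u \<in> H0 J \<and> rayleigh p J u = lambda1 p J"

definition gradient_flow_solution ::
    "('a::real_inner \<Rightarrow> ereal) \<Rightarrow> 'a \<Rightarrow> (real \<Rightarrow> 'a) \<Rightarrow> bool" where
  "gradient_flow_solution J f u \<longleftrightarrow>
     continuous_on {0..} u \<and>
     (\<forall>\<delta>>0. \<exists>L. L-lipschitz_on {\<delta>..} u) \<and>
     u 0 = f \<and>
     (\<forall>t>0. \<exists>\<zeta>. min_norm_subgrad J (u t) \<zeta> \<and>
             (u has_vector_derivative (- \<zeta>)) (at t within {t..}))"

definition extinction_time :: "(real \<Rightarrow> 'a::zero) \<Rightarrow> real" where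
  "extinction_time u = Inf {T. T > 0 \<and> (\<forall>t\<ge>T. u t = 0)}"

end

theory Submission
  imports Defs
begin

lemma right_deriv_mono:
  fixes g :: "real \<Rightarrow> real"
  assumes ab: "a \<le> b" and cont: "continuous_on {a..b} g"
    and der: "\<And>t. a < t \<Longrightarrow> t < b \<Longrightarrow> \<exists>D. (g has_real_derivative D) (at t within {t..}) \<and> D \<le> 0"
  shows "g b \<le> g a"
proof -
  have key: "g b \<le> g a + e * (b - a) + e" if e: "e > 0" for e
  proof -
    define h where "h x = g x - g a - e * (x - a)" for x
    have hcont: "continuous_on {a..b} h"
      unfolding h_def by (intro continuous_intros cont)
    define S where "S = {x\<in>{a..b}. \<forall>y\<in>{a..x}. h y \<le> e}"
    have aS: "a \<in> S" using ab e by (auto simp: S_def h_def)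
    have bdd: "bdd_above S" by (auto simp: S_def bdd_above_def)
    define s where "s = Sup S"
    have s_ge: "a \<le> s" unfolding s_def using aS bdd by (rule cSup_upper)
    have s_le: "s \<le> b" unfolding s_def using aS by (intro cSup_least) (auto simp: S_def)
    have hS: "h y \<le> e" if ys: "a \<le> y" "y < s" for y
    proof -
      obtain x where "x \<in> S" "y < x" using less_cSupD[of S y] aS ys unfolding s_def by blast
      then show ?thesis using ys by (auto simp: S_def)
    qed
    have hs: "h s \<le> e"
    proof (cases "a = s")
      case True then show ?thesis using e by (simp add: h_def)
    next
      case False
      then have as: "a < s" using s_ge by simp
      have cl: "closed {x \<in> {a..s}. h x \<le> e}"
        using hcont s_le by (intro continuous_on_closed_Collect_le continuous_intros)
          (auto elim: continuous_on_subset)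
      have "{a..<s} \<subseteq> {x \<in> {a..s}. h x \<le> e}" using hS by auto
      then have "closure {a..<s} \<subseteq> {x \<in> {a..s}. h x \<le> e}"
        using cl by (rule closure_minimal)
      then show ?thesis using as by (auto simp: subset_iff)
    qed
    have "s = b"
    proof (rule ccontr)
      assume "s \<noteq> b"
      then have sb: "s < b" using s_le by simp
      have ev: "eventually (\<lambda>y. h y \<le> e) (at s within {s..})"
      proof (cases "h s < e")
        case True
        have "continuous (at s within {a..b}) h"
          using hcont s_ge s_le by (simp add: continuous_on_eq_continuous_within)
        then have "(h \<longlongrightarrow> h s) (at s within {a..b})" by (simp add: continuous_within)
        then have "eventually (\<lambda>y. h y < e) (at s within {a..b})"
          using True by (rule order_tendstoD)
        moreover have "eventually (\<lambda>y. y < b) (nhds s)"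
          using eventually_nhds_in_open[of "{..<b}" s] sb by simp
        ultimately have "eventually (\<lambda>y. h y < e) (at s within {s..})"
          unfolding eventually_at_filter by eventually_elim (use s_ge in auto)
        then show ?thesis by (auto elim: eventually_mono)
      next
        case False
        then have hse: "h s = e" using hs by simp
        then have as: "a < s" using s_ge e by (cases "a = s") (auto simp: h_def)
        obtain D where D: "(g has_real_derivative D) (at s within {s..})" "D \<le> 0"
          using der[OF as sb] by blast
        have "(h has_real_derivative D - e) (at s within {s..})"
          unfolding h_def by (auto intro!: derivative_eq_intros D(1))
        then have "((\<lambda>y. (h y - h s) / (y - s)) \<longlongrightarrow> D - e) (at s within {s..})"
          by (simp add: has_field_derivative_iff)
        then have "eventually (\<lambda>y. (h y - h s) / (y - s) < 0) (at s within {s..})"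
          using D(2) e by (intro order_tendstoD) auto
        moreover have "eventually (\<lambda>y. y > s) (at s within {s..})"
          by (auto simp: eventually_at_filter)
        ultimately show ?thesis
          by eventually_elim (use hse in \<open>auto simp: divide_less_0_iff\<close>)
      qed
      then obtain d where d: "d > 0" "\<And>y. y \<in> {s..} \<Longrightarrow> y \<noteq> s \<Longrightarrow> dist y s < d \<Longrightarrow> h y \<le> e"
        unfolding eventually_at by blast
      define x where "x = min (s + d/2) b"
      have "x \<in> S"
        unfolding S_def
      proof (safe)
        show "x \<in> {a..b}" using s_ge sb d by (auto simp: x_def)
        fix y assume y: "y \<in> {a..x}"
        show "h y \<le> e"
        proof (cases "y < s")
          case True then show ?thesis using hS y by auto
        next
          case False
          show ?thesis
          proof (cases "y = s")
            case True then show ?thesis using hs by simp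
          next
            case ne: False
            then show ?thesis using False y d by (intro d(2)) (auto simp: x_def dist_real_def)
          qed
        qed
      qed
      then have "x \<le> s" unfolding s_def using bdd by (rule cSup_upper)
      then show False using sb d by (auto simp: x_def)
    qed
    then have "h b \<le> e" using hs by simp
    then show ?thesis by (simp add: h_def)
  qed
  show ?thesis
  proof (rule ccontr)
    assume "\<not> g b \<le> g a"
    define e where "e = (g b - g a) / (b - a + 2)"
    have e: "e > 0" using \<open>\<not> g b \<le> g a\<close> ab by (simp add: e_def)
    have "e * (b - a) + e < g b - g a"
    proof -
      have "e * (b - a + 2) = g b - g a" using ab by (simp add: e_def)
      then show ?thesis using e by (simp add: algebra_simps)
    qed
    then show False using key[OF e] by simp
  qed
qed
lemma J_neg:
  assumes "abs_homogeneous p J"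
  shows "J (- u) = J u"
  using assms unfolding abs_homogeneous_def
  by (metis abs_minus_cancel abs_one ereal_mult_left_mono mult_1 powr_one_eq_one scaleR_minus1_left times_ereal.simps(1) neg_equal_0_iff_equal one_neq_zero mult.left_neutral one_ereal_def)

lemma J_nonneg:
  assumes h: "abs_homogeneous p J" and c: "convex_fun J"
  shows "J u \<ge> 0"
proof -
  have "J ((1 - 1/2) *\<^sub>R u + (1/2) *\<^sub>R (-u)) \<le> ereal (1 - 1/2) * J u + ereal (1/2) * J (-u)"
    using c unfolding convex_fun_def by (metis divide_nonneg_nonneg less_eq_real_def zero_less_one one_le_numeral divide_le_eq_1 zero_le_numeral zero_less_numeral)
  moreover have "(1 - 1/2) *\<^sub>R u + (1/2) *\<^sub>R (-u) = (0::'a)" by (simp add: scaleR_minus_right)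
  moreover have "J 0 = 0" using h by (simp add: abs_homogeneous_def)
  ultimately have "0 \<le> ereal (1/2) * J u + ereal (1/2) * J u" using J_neg[OF h, of u] by simp
  then show ?thesis by (cases "J u") auto
qed

lemma subdiff_finite:
  assumes "proper_fun J" "\<zeta> \<in> subdiff J u"
  shows "J u \<noteq> \<infinity>"
proof
  assume inf: "J u = \<infinity>"
  obtain v where v: "J v \<noteq> \<infinity>" using assms(1) by (auto simp: proper_fun_def)
  have "J u + ereal (\<zeta> \<bullet> (v - u)) \<le> J v" using assms(2) by (auto simp: subdiff_def)
  then show False using inf v by simp
qed

lemma euler_ineq:
  assumes h: "abs_homogeneous p J" and z: "\<zeta> \<in> subdiff J u" and r: "J u = ereal r"
  shows "p * r \<le> \<zeta> \<bullet> u"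
proof -
  have le: "(c powr p - 1) / (c - 1) * r \<le> \<zeta> \<bullet> u" if c: "0 < c" "c < 1" for c
  proof -
    have "J u + ereal (\<zeta> \<bullet> (c *\<^sub>R u - u)) \<le> J (c *\<^sub>R u)" using z by (auto simp: subdiff_def)
    also have "J (c *\<^sub>R u) = ereal (c powr p) * J u" using h c by (auto simp: abs_homogeneous_def)
    finally have "r + (c - 1) * (\<zeta> \<bullet> u) \<le> c powr p * r"
      using r by (simp add: inner_diff_right algebra_simps)
    then have "(1 - c powr p) * r \<le> (1 - c) * (\<zeta> \<bullet> u)" by (simp add: algebra_simps)
    then have "(1 - c powr p) * r / (1 - c) \<le> \<zeta> \<bullet> u" using c by (simp add: divide_le_eq mult.commute)
    moreover have "(c powr p - 1) / (c - 1) = (1 - c powr p) / (1 - c)"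
      by (metis minus_diff_eq minus_divide_divide)
    ultimately show ?thesis by simp
  qed
  have "((\<lambda>z. z powr p) has_real_derivative p * 1 powr (p - 1)) (at 1)"
    by (rule has_real_derivative_powr) simp
  then have "((\<lambda>c. (c powr p - 1 powr p) / (c - 1)) \<longlongrightarrow> p) (at 1)"
    by (simp add: has_field_derivative_iff)
  then have "((\<lambda>c. (c powr p - 1) / (c - 1)) \<longlongrightarrow> p) (at_left 1)"
    by (simp add: filterlim_at_split)
  then have lim: "((\<lambda>c. (c powr p - 1) / (c - 1) * r) \<longlongrightarrow> p * r) (at_left 1)"
    by (intro tendsto_intros)
  have ev: "eventually (\<lambda>c. (c powr p - 1) / (c - 1) * r \<le> \<zeta> \<bullet> u) (at_left (1::real))"
  proof -
    have "eventually (\<lambda>c. 0 < c) (at_left (1::real))"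
      by (intro order_tendstoD(1)[OF tendsto_ident_at]) simp
    moreover have "eventually (\<lambda>c. c < 1) (at_left (1::real))"
      by (auto simp: eventually_at_filter)
    ultimately show ?thesis by eventually_elim (rule le)
  qed
  show ?thesis using lim ev by (rule tendsto_upperbound) simp
qed

lemma null_le:
  assumes h: "abs_homogeneous p J" and c: "convex_fun J" and n: "J n = 0" and r: "J u = ereal r"
  shows "J (u + n) \<le> J u"
proof -
  have le: "J (u + n) \<le> ereal (\<theta> * (1/\<theta>) powr p * r)" if th: "0 < \<theta>" "\<theta> < 1" for \<theta>
  proof -
    have "J ((1 - (1 - \<theta>)) *\<^sub>R ((1/\<theta>) *\<^sub>R u) + (1 - \<theta>) *\<^sub>R ((1/(1-\<theta>)) *\<^sub>R n))
       \<le> ereal (1 - (1 - \<theta>)) * J ((1/\<theta>) *\<^sub>R u) + ereal (1 - \<theta>) * J ((1/(1-\<theta>)) *\<^sub>R n)"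
      by (rule c[unfolded convex_fun_def, rule_format]) (use th in auto)
    moreover have "(1 - (1 - \<theta>)) *\<^sub>R ((1/\<theta>) *\<^sub>R u) + (1 - \<theta>) *\<^sub>R ((1/(1-\<theta>)) *\<^sub>R n) = u + n"
      using th by simp
    moreover have "J ((1/\<theta>) *\<^sub>R u) = ereal ((1/\<theta>) powr p) * J u" using h th by (auto simp: abs_homogeneous_def)
    moreover have "J ((1/(1-\<theta>)) *\<^sub>R n) = ereal ((1/(1-\<theta>)) powr p) * J n" using h th by (auto simp: abs_homogeneous_def)
    ultimately show ?thesis using n r by (simp add: mult.assoc)
  qed
  have lim: "((\<lambda>\<theta>. \<theta> * (1/\<theta>) powr p * r) \<longlongrightarrow> 1 * (1/1) powr p * r) (at_left (1::real))"
    by (intro tendsto_intros tendsto_powr) auto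
  have fin: "J (u + n) \<noteq> \<infinity>" using le[of "1/2"] by auto
  have nn: "J (u + n) \<noteq> -\<infinity>" using J_nonneg[OF h c, of "u+n"] by auto
  obtain q where q: "J (u + n) = ereal q" using fin nn by (cases "J (u+n)") auto
  have ev: "eventually (\<lambda>\<theta>. q \<le> \<theta> * (1/\<theta>) powr p * r) (at_left (1::real))"
  proof -
    have "eventually (\<lambda>c. 0 < c) (at_left (1::real))"
      by (intro order_tendstoD(1)[OF tendsto_ident_at]) simp
    moreover have "eventually (\<lambda>c. c < 1) (at_left (1::real))"
      by (auto simp: eventually_at_filter)
    ultimately show ?thesis by eventually_elim (use le q in auto)
  qed
  have "q \<le> r" using lim ev by (intro tendsto_lowerbound) auto
  then show ?thesis using q r by simp
qed

lemma subgrad_orth: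
  assumes h: "abs_homogeneous p J" and c: "convex_fun J" and pr: "proper_fun J"
    and z: "\<zeta> \<in> subdiff J u" and n: "J n = 0"
  shows "\<zeta> \<bullet> n = 0"
proof -
  obtain r where r: "J u = ereal r"
    using subdiff_finite[OF pr z] J_nonneg[OF h c, of u] by (cases "J u") auto
  have n': "J (-n) = 0" using J_neg[OF h] n by simp
  have a: "J u + ereal (\<zeta> \<bullet> ((u + n) - u)) \<le> J (u + n)" using z unfolding subdiff_def by blast
  have b: "J u + ereal (\<zeta> \<bullet> ((u + - n) - u)) \<le> J (u + - n)" using z unfolding subdiff_def by blast
  have "ereal (r + \<zeta> \<bullet> n) \<le> ereal r" using order_trans[OF a null_le[OF h c n r]] r by simp
  then have "\<zeta> \<bullet> n \<le> 0" by simp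
  moreover have "ereal (r + \<zeta> \<bullet> (-n)) \<le> ereal r" using order_trans[OF b null_le[OF h c n' r]] r by simp
  then have "\<zeta> \<bullet> (-n) \<le> 0" by simp
  ultimately show ?thesis by simp
qed

lemma vd_inner_const:
  fixes u :: "real \<Rightarrow> 'a::real_inner"
  assumes "(u has_vector_derivative v) (at t within S)"
  shows "((\<lambda>t. u t \<bullet> n) has_real_derivative v \<bullet> n) (at t within S)"
  using assms unfolding has_real_derivative_iff_has_vector_derivative has_vector_derivative_def
  by (auto intro!: derivative_eq_intros simp: inner_scaleR_left)
lemma vd_inner_self:
  fixes u :: "real \<Rightarrow> 'a::real_inner"
  assumes "(u has_vector_derivative v) (at t within S)"
  shows "((\<lambda>t. u t \<bullet> u t) has_real_derivative 2 * (v \<bullet> u t)) (at t within S)"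
  using assms unfolding has_real_derivative_iff_has_vector_derivative has_vector_derivative_def
  by (auto intro!: derivative_eq_intros simp: inner_scaleR_left inner_scaleR_right inner_commute algebra_simps)
lemma nb: "at (t::real) within {t..} \<noteq> bot"
proof
  assume "at t within {t..} = bot"
  moreover have "at_right t \<le> at t within {t..}" by (rule at_le) auto
  ultimately show False using trivial_limit_at_right_real[of t] by (metis le_bot)
qed

theorem corollary7:
  fixes J :: "'a::{real_inner, complete_space} \<Rightarrow> ereal"
    and p :: real and f w_star :: 'a and u :: "real \<Rightarrow> 'a"
  assumes p: "1 \<le> p" "p < 2"
    and J: "convex_fun J" "lsc_fun J" "proper_fun J" "dense_domain J" "abs_homogeneous p J"
    and coercive: "lambda1 p J > 0"
    and f: "f \<in> H0 J"
    and sol: "gradient_flow_solution J f u"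
    and Tex: "extinction_time u = norm f powr (2 - p) / ((2 - p) * real_of_ereal (lambda1 p J))"
    and profile: "\<exists>t :: nat \<Rightarrow> real. incseq t \<and> (\<forall>k. 0 \<le> t k \<and> t k < extinction_time u) \<and>
        t \<longlonglongrightarrow> extinction_time u \<and>
        (\<lambda>k. (1 / (1 - t k / extinction_time u) powr (1 / (2 - p))) *\<^sub>R u (t k)) \<longlonglongrightarrow> w_star"
  shows "ground_state p J w_star"
proof -
  define T where "T = extinction_time u"
  obtain tk where tk: "\<forall>k. 0 \<le> tk k \<and> tk k < T" "tk \<longlonglongrightarrow> T"
     "(\<lambda>k. (1 / (1 - tk k / T) powr (1 / (2 - p))) *\<^sub>R u (tk k)) \<longlonglongrightarrow> w_star"
    using profile unfolding T_def by blast
  have Tpos: "T > 0" using tk(1) by (meson le_less_trans)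
  have l1_ninf: "lambda1 p J \<noteq> \<infinity>"
  proof
    assume "lambda1 p J = \<infinity>"
    then have "T = 0" using Tex by (simp add: T_def)
    then show False using Tpos by simp
  qed
  obtain lam where lam: "lambda1 p J = ereal lam" "lam > 0"
    using coercive l1_ninf by (cases "lambda1 p J") auto
  have p2: "2 - p > 0" using p by simp
  have Teq: "norm f powr (2 - p) = (2 - p) * lam * T"
    using Tex lam p2 by (simp add: T_def field_simps)
  have f0: "f \<noteq> 0" and forth: "\<And>n. J n = 0 \<Longrightarrow> n \<bullet> f = 0"
    using f by (auto simp: H0_def orthogonal_comp_def nullspace_J_def orthogonal_def)
  have Jnn: "\<And>v. J v \<ge> 0" using J_nonneg[OF J(5) J(1)] .
  have ray: "lam * norm v powr p \<le> p * r" if v: "v \<in> H0 J" "J v = ereal r" for v r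
  proof -
    have "lambda1 p J \<le> rayleigh p J v" unfolding lambda1_def using v(1) by (rule INF_lower)
    moreover have nv: "norm v powr p > 0" using v(1) by (auto simp: H0_def)
    ultimately have "lam \<le> p * r / norm v powr p" using lam v(2) by (simp add: rayleigh_def)
    then show ?thesis using nv by (simp add: field_simps)
  qed
  have ucont: "continuous_on {0..} u" and u0: "u 0 = f"
    and der: "\<And>t. t > 0 \<Longrightarrow> \<exists>\<zeta>. min_norm_subgrad J (u t) \<zeta> \<and> (u has_vector_derivative (- \<zeta>)) (at t within {t..})"
    using sol by (auto simp: gradient_flow_solution_def)
  define z where "z t = (SOME \<zeta>. min_norm_subgrad J (u t) \<zeta> \<and> (u has_vector_derivative (- \<zeta>)) (at t within {t..}))" for t
  have zt: "z t \<in> subdiff J (u t)" "(u has_vector_derivative (- z t)) (at t within {t..})" if "t > 0" for t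
  proof -
    have "min_norm_subgrad J (u t) (z t) \<and> (u has_vector_derivative (- z t)) (at t within {t..})"
      unfolding z_def by (rule someI_ex[OF der[OF that]])
    then show "z t \<in> subdiff J (u t)" "(u has_vector_derivative (- z t)) (at t within {t..})"
      by (auto simp: min_norm_subgrad_def)
  qed
  define Ju where "Ju t = real_of_ereal (J (u t))" for t
  have JuE: "J (u t) = ereal (Ju t)" if "t > 0" for t
    using subdiff_finite[OF J(3) zt(1)[OF that]] Jnn[of "u t"] unfolding Ju_def by (cases "J (u t)") auto
  have Ju_nn: "Ju t \<ge> 0" if "t > 0" for t using JuE[OF that] Jnn[of "u t"] by simp
  have eul: "p * Ju t \<le> z t \<bullet> u t" if "t > 0" for t
    using euler_ineq[OF J(5) zt(1)[OF that] JuE[OF that]] .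

  have orth_le: "u t \<bullet> n \<le> 0" if t: "t > 0" and n: "J n = 0" for t n
  proof -
    have "u t \<bullet> n \<le> u 0 \<bullet> n"
    proof (rule right_deriv_mono[where g="\<lambda>s. u s \<bullet> n"])
      show "0 \<le> t" using t by simp
      show "continuous_on {0..t} (\<lambda>s. u s \<bullet> n)"
        by (intro continuous_intros continuous_on_subset[OF ucont]) auto
      fix s assume s: "0 < s" "s < t"
      have "((\<lambda>s. u s \<bullet> n) has_real_derivative (- z s) \<bullet> n) (at s within {s..})"
        using vd_inner_const[OF zt(2)[OF s(1)]] .
      moreover have "(- z s) \<bullet> n = 0" using subgrad_orth[OF J(5) J(1) J(3) zt(1)[OF s(1)] n] by simp
      ultimately show "\<exists>D. ((\<lambda>s. u s \<bullet> n) has_real_derivative D) (at s within {s..}) \<and> D \<le> 0" by auto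
    qed
    then show ?thesis using forth[OF n] u0 by (simp add: inner_commute)
  qed
  have orth: "n \<bullet> u t = 0" if t: "t \<ge> 0" and n: "J n = 0" for t n
  proof (cases "t = 0")
    case True then show ?thesis using forth[OF n] u0 by simp
  next
    case False
    then have t': "t > 0" using t by simp
    have "J (-n) = 0" using J_neg[OF J(5)] n by simp
    then have "u t \<bullet> (-n) \<le> 0" using orth_le[OF t'] by blast
    moreover have "u t \<bullet> n \<le> 0" using orth_le[OF t' n] .
    ultimately show ?thesis by (simp add: inner_commute)
  qed
  have uH0: "u t \<in> H0 J" if "t \<ge> 0" "u t \<noteq> 0" for t
    using orth[OF that(1)] that(2) by (auto simp: H0_def orthogonal_comp_def nullspace_J_def orthogonal_def)

  have Emono: "u b \<bullet> u b \<le> u a \<bullet> u a" if ab: "0 \<le> a" "a \<le> b" for a b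
  proof (rule right_deriv_mono[where g = "\<lambda>s. u s \<bullet> u s"])
    show "a \<le> b" using ab by simp
    show "continuous_on {a..b} (\<lambda>s. u s \<bullet> u s)"
      by (intro continuous_intros continuous_on_subset[OF ucont]) (use ab in auto)
    fix s assume s: "a < s" "s < b"
    then have s0: "s > 0" using ab by simp
    have "((\<lambda>s. u s \<bullet> u s) has_real_derivative 2 * ((- z s) \<bullet> u s)) (at s within {s..})"
      using vd_inner_self[OF zt(2)[OF s0]] .
    moreover have "2 * ((- z s) \<bullet> u s) \<le> 0"
      using eul[OF s0] Ju_nn[OF s0] p by simp (metis mult_nonneg_nonneg order_trans zero_le_one order.trans less_eq_real_def)
    ultimately show "\<exists>D. ((\<lambda>s. u s \<bullet> u s) has_real_derivative D) (at s within {s..}) \<and> D \<le> 0" by blast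
  qed
  have stay0: "u t = 0" if "0 \<le> s" "s \<le> t" "u s = 0" for s t
    using Emono[OF that(1,2)] that(3) by (metis inner_ge_zero inner_eq_zero_iff inner_zero_left order_antisym)
  have nz: "u t \<noteq> 0" if t: "0 \<le> t" "t < T" for t
  proof
    assume ut: "u t = 0"
    then have "t \<noteq> 0" using f0 u0 by auto
    then have "t \<in> {T. T > 0 \<and> (\<forall>s\<ge>T. u s = 0)}" using t stay0[OF t(1) _ ut] by auto
    moreover have "bdd_below {T. T > 0 \<and> (\<forall>s\<ge>T. u s = 0)}"
      by (rule bdd_belowI[of _ 0]) auto
    ultimately have "T \<le> t" unfolding T_def extinction_time_def by (rule cInf_lower)
    then show False using t by simp
  qed
  define q where "q = (2 - p) / 2"
  have q: "q > 0" "2 * q = 2 - p" using p2 by (auto simp: q_def)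
  define \<psi> where "\<psi> s = (u s \<bullet> u s) powr q + (2 - p) * lam * s" for s
  have Epow: "(u s \<bullet> u s) powr q = norm (u s) powr (2 - p)" for s
  proof -
    have e: "(u s \<bullet> u s) = norm (u s) powr 2" by (simp add: power2_norm_eq_inner[symmetric] powr_numeral)
    have "(u s \<bullet> u s) powr q = norm (u s) powr (2 * q)" unfolding e by (rule powr_powr)
    then show ?thesis by (simp add: q(2))
  qed
  have Epow1: "(u s \<bullet> u s) powr (q - 1) = 1 / norm (u s) powr p" if "u s \<noteq> 0" for s
  proof -
    have e: "(u s \<bullet> u s) = norm (u s) powr 2" by (simp add: power2_norm_eq_inner[symmetric] powr_numeral)
    have "(u s \<bullet> u s) powr (q - 1) = norm (u s) powr (2 * (q - 1))" unfolding e by (rule powr_powr)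
    moreover have "2 * (q - 1) = - p" using q(2) by simp
    ultimately have "(u s \<bullet> u s) powr (q - 1) = norm (u s) powr (- p)" by simp
    then show ?thesis by (simp add: powr_minus_divide)
  qed
  have psi_cont: "continuous_on {0..T} \<psi>"
    unfolding \<psi>_def
    by (intro continuous_intros continuous_on_powr' continuous_on_subset[OF ucont]) (use q in auto)
  define D where "D s = q * (u s \<bullet> u s) powr (q - 1) * (2 * ((- z s) \<bullet> u s)) + (2 - p) * lam" for s
  have psi_der: "(\<psi> has_real_derivative D s) (at s within {s..})" if s: "0 < s" "s < T" for s
  proof -
    have pos: "u s \<bullet> u s > 0" using nz[of s] s by simp
    have "((\<lambda>s. (u s \<bullet> u s) powr q) has_real_derivative q * (u s \<bullet> u s) powr (q - 1) * (2 * ((- z s) \<bullet> u s))) (at s within {s..})"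
      using DERIV_chain2[OF has_real_derivative_powr[OF pos] vd_inner_self[OF zt(2)[OF s(1)]]] by simp
    moreover have "((\<lambda>s. (2 - p) * lam * s) has_real_derivative (2 - p) * lam) (at s within {s..})"
      by (auto intro!: derivative_eq_intros)
    ultimately show ?thesis unfolding \<psi>_def D_def by (rule DERIV_add)
  qed
  have D_eq: "D s = (2 - p) * (lam - (z s \<bullet> u s) / norm (u s) powr p)" if s: "0 < s" "s < T" for s
  proof -
    have "D s = - (2 * q) * (z s \<bullet> u s) / norm (u s) powr p + (2 - p) * lam"
      using Epow1[OF nz[of s]] s by (simp add: D_def)
    then show ?thesis unfolding q(2) by (simp add: algebra_simps diff_divide_distrib)
  qed
  have D_le: "D s \<le> 0" if s: "0 < s" "s < T" for s
  proof -
    have "lam * norm (u s) powr p \<le> z s \<bullet> u s"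
      using ray[OF uH0[OF _ nz[of s]] JuE[of s]] eul[of s] s by simp
    moreover have "norm (u s) powr p > 0" using nz[of s] s by simp
    ultimately have "lam \<le> (z s \<bullet> u s) / norm (u s) powr p" by (simp add: field_simps)
    then show ?thesis using D_eq[OF s] p2 by (simp add: mult_nonneg_nonpos)
  qed
  have psi_mono: "\<psi> b \<le> \<psi> a" if ab: "0 \<le> a" "a \<le> b" "b \<le> T" for a b
  proof (rule right_deriv_mono[where g = \<psi>])
    show "a \<le> b" using ab by simp
    show "continuous_on {a..b} \<psi>" using psi_cont by (rule continuous_on_subset) (use ab in auto)
    fix s assume s: "a < s" "s < b"
    show "\<exists>D. (\<psi> has_real_derivative D) (at s within {s..}) \<and> D \<le> 0"
      using psi_der[of s] D_le[of s] s ab by auto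
  qed
  have psi0: "\<psi> 0 = (2 - p) * lam * T" using Teq u0 Epow[of 0] by (simp add: \<psi>_def)
  have psiT: "\<psi> T \<ge> (2 - p) * lam * T" by (simp add: \<psi>_def)
  have psi_const: "\<psi> s = (2 - p) * lam * T" if s: "0 \<le> s" "s \<le> T" for s
    using psi_mono[of 0 s] psi_mono[of s T] s psi0 psiT by simp
  have norm_u: "norm (u s) powr (2 - p) = (2 - p) * lam * (T - s)" if s: "0 \<le> s" "s \<le> T" for s
    using psi_const[OF s] Epow[of s] by (simp add: \<psi>_def algebra_simps)
  have Jbound: "p * Ju s \<le> lam * norm (u s) powr p" if s: "0 < s" "s < T" for s
  proof -
    have "(\<psi> has_real_derivative 0) (at s within {s..})"
    proof (rule has_field_derivative_transform_within)
      show "((\<lambda>x. (2 - p) * lam * T) has_real_derivative 0) (at s within {s..})" by simp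
      show "0 < T - s" using s by simp
      show "s \<in> {s..}" by simp
      fix x assume "x \<in> {s..}" "dist x s < T - s"
      then show "(2 - p) * lam * T = \<psi> x" using psi_const[of x] s by (auto simp: dist_real_def)
    qed
    then have "D s = 0" using psi_der[OF s] nb[of s]
      by (metis has_real_derivative_iff_has_vector_derivative vector_derivative_unique_within)
    then have "(z s \<bullet> u s) / norm (u s) powr p = lam" using D_eq[OF s] p2 by simp
    moreover have "norm (u s) powr p > 0" using nz[of s] s by simp
    ultimately have "z s \<bullet> u s = lam * norm (u s) powr p" by (simp add: field_simps)
    then show ?thesis using eul[of s] s by simp
  qed
  have tpos_ev: "eventually (\<lambda>k. tk k > 0) sequentially"
    using order_tendstoD(1)[OF tk(2) Tpos] .
  define a where "a k = (1 - tk k / T) powr (1 / (2 - p))" for k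
  define w where "w k = (1 / a k) *\<^sub>R u (tk k)" for k
  have wlim: "w \<longlonglongrightarrow> w_star" using tk(3) unfolding w_def a_def .
  have sk: "0 \<le> tk k" "tk k < T" for k using tk(1) by auto
  have a_pos: "a k > 0" for k
  proof -
    have "tk k / T < 1" using sk[of k] Tpos by simp
    then show ?thesis using sk[of k] by (simp add: a_def)
  qed
  have norm_uk: "norm (u (tk k)) = norm f * a k" for k
  proof -
    let ?s = "tk k"
    have "norm (u ?s) powr (2 - p) = (2 - p) * lam * (T - ?s)"
      using norm_u[of ?s] sk[of k] by simp
    also have "T - ?s = T * (1 - ?s / T)" using Tpos by (simp add: field_simps)
    also have "(2 - p) * lam * (T * (1 - ?s / T)) = norm f powr (2 - p) * (1 - ?s / T)"
      by (simp only: Teq mult.assoc)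
    finally have e: "norm (u ?s) powr (2 - p) = norm f powr (2 - p) * (1 - ?s / T)" .
    have "norm (u ?s) = (norm (u ?s) powr (2 - p)) powr (1 / (2 - p))"
      using p2 by (simp add: powr_powr)
    also have "\<dots> = (norm f powr (2 - p)) powr (1 / (2 - p)) * (1 - ?s / T) powr (1 / (2 - p))"
      unfolding e by (rule powr_mult)
    also have "(norm f powr (2 - p)) powr (1 / (2 - p)) = norm f" using p2 by (simp add: powr_powr)
    finally show ?thesis by (simp add: a_def)
  qed
  have norm_w: "norm (w k) = norm f" for k
    using a_pos[of k] norm_uk[of k] by (simp add: w_def)
  define c where "c = lam * norm f powr p / p"
  have Jw: "J (w k) \<le> ereal c" if tkp: "tk k > 0" for k
  proof -
    let ?s = "tk k"
    have "J (w k) = ereal ((1 / a k) powr p) * J (u ?s)"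
      using J(5) a_pos[of k] unfolding w_def abs_homogeneous_def by simp
    also have "\<dots> = ereal ((1 / a k) powr p * Ju ?s)" using JuE[OF tkp] by simp
    finally have e: "J (w k) = ereal ((1 / a k) powr p * Ju ?s)" .
    have "p * Ju ?s \<le> lam * (norm f * a k) powr p" using Jbound[OF tkp sk(2)] norm_uk[of k] by simp
    also have "\<dots> = lam * norm f powr p * a k powr p" by (simp add: powr_mult)
    finally have "p * Ju ?s \<le> lam * norm f powr p * a k powr p" .
    then have "(1 / a k) powr p * (p * Ju ?s) \<le> (1 / a k) powr p * (lam * norm f powr p * a k powr p)"
      by (intro mult_left_mono) auto
    also have "\<dots> = lam * norm f powr p * ((1 / a k) powr p * a k powr p)" by (simp add: algebra_simps)
    also have "(1 / a k) powr p * a k powr p = 1"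
      using a_pos[of k] by (simp add: powr_divide)
    finally have "p * ((1 / a k) powr p * Ju ?s) \<le> lam * norm f powr p" by (simp add: algebra_simps)
    then have "(1 / a k) powr p * Ju ?s \<le> c" using p by (simp add: c_def field_simps)
    then show ?thesis using e by simp
  qed
  have nws: "norm w_star = norm f"
  proof -
    have "(\<lambda>k. norm (w k)) \<longlonglongrightarrow> norm w_star" using tendsto_norm[OF wlim] .
    then show ?thesis using norm_w by (simp add: LIMSEQ_const_iff)
  qed
  have Jws: "J w_star \<le> ereal c"
  proof -
    have "w_star \<in> {v. J v \<le> ereal c}"
    proof (rule Lim_in_closed_set[OF _ _ _ wlim])
      show "closed {v. J v \<le> ereal c}" using J(2) by (simp add: lsc_fun_def)
      show "eventually (\<lambda>k. w k \<in> {v. J v \<le> ereal c}) sequentially"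
        using tpos_ev by eventually_elim (use Jw in auto)
    qed simp
    then show ?thesis by simp
  qed
  have ws_orth: "n \<bullet> w_star = 0" if n: "J n = 0" for n
  proof -
    have "(\<lambda>k. n \<bullet> w k) \<longlonglongrightarrow> n \<bullet> w_star" using tendsto_inner[OF tendsto_const wlim] .
    moreover have "n \<bullet> w k = 0" for k using orth[OF sk(1)[of k] n] by (simp add: w_def)
    ultimately show ?thesis by (simp add: LIMSEQ_const_iff)
  qed
  have wsH: "w_star \<in> H0 J"
    using ws_orth nws f0 by (auto simp: H0_def orthogonal_comp_def nullspace_J_def orthogonal_def)
  obtain r where r: "J w_star = ereal r" "r \<le> c"
    using Jws Jnn[of w_star] by (cases "J w_star") auto
  have nfp: "norm f powr p > 0" using f0 by simp
  have "rayleigh p J w_star = ereal (p * r / norm f powr p)"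
    using r nws nfp by (simp add: rayleigh_def)
  also have "\<dots> \<le> ereal lam"
  proof -
    have "p * r \<le> p * c" using r(2) p by (intro mult_left_mono) auto
    also have "p * c = lam * norm f powr p" using p by (simp add: c_def)
    finally show ?thesis using nfp by (simp add: divide_le_eq)
  qed
  finally have "rayleigh p J w_star \<le> lambda1 p J" using lam by simp
  moreover have "lambda1 p J \<le> rayleigh p J w_star" unfolding lambda1_def using wsH by (rule INF_lower)
  ultimately show ?thesis using wsH by (simp add: ground_state_def)
qed

end
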